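(* Let $A,B$ be finite sets with $\#B\ge 2$ and $\#A\ge 16\,\#B$. Let $\varepsilon$ and $\Phi$ be numbers with $\varepsilon\ge 4\#B/\#A$ and $1\le\Phi\le 2^{\#A/(4\#B)}$. Then there exists a family $\mathcal C$ of functions $A\to B$ of cardinality $$\left\lceil\max\left\{\frac{20\,\#B}{\varepsilon},\ \frac{6\Phi\log_2(\#B)}{\varepsilon},\ 6\Phi\cdot\#B\cdot\log_2(\#B)\right\}\right\rceil$$ with the following property: for every family $\mathcal F$ of functions $A\to B$ with $\#\mathcal F\le\Phi$ and every mapping $\mathfrak H$ assigning to each $b\in B$ a set $\mathfrak H(b)$ of functions $A\to B$ with $\#(\mathfrak H(b)\cap\mathcal C)\le \tfrac14\#\mathcal C$ for every $b\in B$, the number of pairs $\langle a,b\rangle\in A\times B$ that are not covered by any $c\in\mathcal C$ (with respect to $\mathcal F$ and $\mathfrak H$) is at most $\varepsilon\cdot\#A\cdot\#B$.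
   Context: A family $\mathcal F$ of functions $A\to B$ rejects a function $c\colon A\to B$ if there exists $f\in\mathcal F$ such that $\#\{x\in A: c(x)=f(x)\}\ge 4\#A/\#B$. Given $\mathcal F$ and a mapping $\mathfrak H$ from $B$ to sets of functions $A\to B$, a function $c\colon A\to B$ covers the pair $\langle a,b\rangle\in A\times B$ if (1) $c(a)=b$, (2) $c$ is not rejected by $\mathcal F$, and (3) $c\notin\mathfrak H(b)$. *)

theory Defs
  imports Complex_Main "HOL-Library.FuncSet"
begin

text \<open>Functions A to B are modelled as extensional functions, i.e. elements of PiE A (lambda _. B).\<close>

definition rejects :: "'a set \<Rightarrow> 'b set \<Rightarrow> ('a \<Rightarrow> 'b) set \<Rightarrow> ('a \<Rightarrow> 'b) \<Rightarrow> bool" where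
  "rejects A B F c \<longleftrightarrow>
     (\<exists>f\<in>F. real (card {x\<in>A. c x = f x}) \<ge> 4 * real (card A) / real (card B))"

definition covers :: "'a set \<Rightarrow> 'b set \<Rightarrow> ('a \<Rightarrow> 'b) set \<Rightarrow> ('b \<Rightarrow> ('a \<Rightarrow> 'b) set)
                       \<Rightarrow> ('a \<Rightarrow> 'b) \<Rightarrow> 'a \<Rightarrow> 'b \<Rightarrow> bool" where
  "covers A B F H c a b \<longleftrightarrow> c a = b \<and> \<not> rejects A B F c \<and> c \<notin> H b"

end

theory Submission
  imports Defs "HOL-Analysis.Harmonic_Numbers"
begin

lemma card_PiE_restrict:
  assumes fin: "finite A" and SA: "S \<subseteq> A" and RB: "\<forall>x\<in>S. R x \<subseteq> B"
  shows "card {c \<in> A \<rightarrow>\<^sub>E B. \<forall>x\<in>S. c x \<in> R x}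
         = (\<Prod>x\<in>S. card (R x)) * card B ^ (card A - card S)"
proof -
  have eq: "{c \<in> A \<rightarrow>\<^sub>E B. \<forall>x\<in>S. c x \<in> R x} = PiE A (\<lambda>x. if x \<in> S then R x else B)"
    using SA RB by (auto simp: PiE_def Pi_def split: if_splits)
  have "card (PiE A (\<lambda>x. if x \<in> S then R x else B)) = (\<Prod>x\<in>A. card (if x \<in> S then R x else B))"
    using fin by (rule card_PiE)
  also have "\<dots> = (\<Prod>x\<in>A. if x \<in> S then card (R x) else card B)"
    by (rule prod.cong) auto
  also have "\<dots> = (\<Prod>x\<in>A \<inter> {x. x \<in> S}. card (R x)) * (\<Prod>x\<in>A \<inter> - {x. x \<in> S}. card B)"
    using fin by (rule prod.If_cases)
  also have "A \<inter> {x. x \<in> S} = S" using SA by auto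
  also have "A \<inter> - {x. x \<in> S} = A - S" by auto
  also have "(\<Prod>x\<in>A - S. card B) = card B ^ (card A - card S)"
    using fin SA by (simp add: card_Diff_subset finite_subset)
  finally show ?thesis using eq by simp
qed

lemma card_seq_restrict:
  assumes "I \<subseteq> {..<k}" "Q \<subseteq> P"
  shows "card {w \<in> {..<k} \<rightarrow>\<^sub>E P. \<forall>i\<in>I. w i \<in> Q} = card Q ^ card I * card P ^ (k - card I)"
  using card_PiE_restrict[of "{..<k}" I "\<lambda>_. Q" P] assms by simp

lemma card_dup:
  assumes "finite P"
  shows "card {w \<in> {..<k} \<rightarrow>\<^sub>E P. \<not> inj_on w {..<k}} \<le> k * k * card P ^ (k - 1)"
proof -
  define \<Omega> where "\<Omega> = {..<k} \<rightarrow>\<^sub>E P"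
  have fin\<Omega>: "finite \<Omega>" unfolding \<Omega>_def using assms by (simp add: finite_PiE)
  have sub: "{w \<in> \<Omega>. \<not> inj_on w {..<k}} \<subseteq> (\<Union>i\<in>{..<k}. \<Union>j\<in>{..<k}. {w \<in> \<Omega>. i \<noteq> j \<and> w i = w j})"
    unfolding inj_on_def by auto
  have each: "card {w \<in> \<Omega>. i \<noteq> j \<and> w i = w j} \<le> card P ^ (k - 1)" if "i < k" "j < k" for i j
  proof (cases "i = j")
    case True then show ?thesis by simp
  next
    case False
    let ?X = "{w \<in> \<Omega>. i \<noteq> j \<and> w i = w j}"
    have inj: "inj_on (\<lambda>w. restrict w ({..<k} - {j})) ?X"
    proof (rule inj_onI)
      fix w v assume w: "w \<in> ?X" and v: "v \<in> ?X"
        and e: "restrict w ({..<k} - {j}) = restrict v ({..<k} - {j})"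
      show "w = v"
      proof
        fix x
        show "w x = v x"
        proof (cases "x \<in> {..<k} - {j}")
          case True then show ?thesis using fun_cong[OF e, of x] by simp
        next
          case F2: False
          show ?thesis
          proof (cases "x = j")
            case True
            have "w i = v i" using fun_cong[OF e, of i] False that by simp
            then show ?thesis using w v True by simp
          next
            case False
            then have "x \<notin> {..<k}" using F2 by simp
            then show ?thesis using w v unfolding \<Omega>_def by (auto simp: PiE_def extensional_def)
          qed
        qed
      qed
    qed
    have img: "(\<lambda>w. restrict w ({..<k} - {j})) ` ?X \<subseteq> ({..<k} - {j}) \<rightarrow>\<^sub>E P"
    proof (rule image_subsetI)
      fix w assume "w \<in> ?X"
      hence "w \<in> Pi ({..<k} - {j}) (\<lambda>_. P)" unfolding \<Omega>_def by (auto simp: PiE_def Pi_def)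
      thus "restrict w ({..<k} - {j}) \<in> ({..<k} - {j}) \<rightarrow>\<^sub>E P" by simp
    qed
    have "card ?X \<le> card (({..<k} - {j}) \<rightarrow>\<^sub>E P)"
      by (rule card_inj_on_le[OF inj img]) (simp add: assms finite_PiE)
    also have "\<dots> = card P ^ (k - 1)"
      using that by (simp add: card_PiE)
    finally show ?thesis .
  qed
  have "card {w \<in> \<Omega>. \<not> inj_on w {..<k}} \<le> card (\<Union>i\<in>{..<k}. \<Union>j\<in>{..<k}. {w \<in> \<Omega>. i \<noteq> j \<and> w i = w j})"
    by (rule card_mono) (use fin\<Omega> sub in \<open>auto intro: finite_subset\<close>)
  also have "\<dots> \<le> (\<Sum>i\<in>{..<k}. card (\<Union>j\<in>{..<k}. {w \<in> \<Omega>. i \<noteq> j \<and> w i = w j}))"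
    by (rule card_UN_le) simp
  also have "\<dots> \<le> (\<Sum>i\<in>{..<k}. (\<Sum>j\<in>{..<k}. card {w \<in> \<Omega>. i \<noteq> j \<and> w i = w j}))"
    by (rule sum_mono) (rule card_UN_le, simp)
  also have "\<dots> \<le> (\<Sum>i\<in>{..<k}. (\<Sum>j\<in>{..<k}. card P ^ (k - 1)))"
    by (intro sum_mono each) auto
  also have "\<dots> = k * k * card P ^ (k - 1)" by simp
  finally show ?thesis unfolding \<Omega>_def .
qed

lemma card_bad1:
  fixes A :: "'a set" and B :: "'b set"
  assumes finA: "finite A" and finB: "finite B"
  shows "card {w \<in> {..<k} \<rightarrow>\<^sub>E (A \<rightarrow>\<^sub>E B). \<exists>f\<in>A \<rightarrow>\<^sub>E B. \<exists>I. I \<subseteq> {..<k} \<and> card I = L \<and>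
            (\<forall>i\<in>I. \<exists>S. S \<subseteq> A \<and> card S = T \<and> (\<forall>x\<in>S. w i x = f x))}
     \<le> card (A \<rightarrow>\<^sub>E B) * ((k choose L) * (((card A choose T) * card B ^ (card A - T)) ^ L
          * card (A \<rightarrow>\<^sub>E B) ^ (k - L)))"
proof -
  define P where "P = A \<rightarrow>\<^sub>E B"
  define \<Omega> where "\<Omega> = {..<k} \<rightarrow>\<^sub>E P"
  define Q where "Q f = (\<Union>S\<in>{S. S \<subseteq> A \<and> card S = T}. {c \<in> P. \<forall>x\<in>S. c x \<in> {f x}})" for f :: "'a \<Rightarrow> 'b"
  define \<beta> where "\<beta> = (card A choose T) * card B ^ (card A - T)"
  have finP: "finite P" unfolding P_def using finA finB by (simp add: finite_PiE)
  have fin\<Omega>: "finite \<Omega>" unfolding \<Omega>_def using finP by (simp add: finite_PiE)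
  have finS: "finite {S. S \<subseteq> A \<and> card S = T}" using finA by simp
  have QP: "Q f \<subseteq> P" for f unfolding Q_def by auto
  have cQ: "card (Q f) \<le> \<beta>" if f: "f \<in> P" for f
  proof -
    have "card (Q f) \<le> (\<Sum>S\<in>{S. S \<subseteq> A \<and> card S = T}. card {c \<in> P. \<forall>x\<in>S. c x \<in> {f x}})"
      unfolding Q_def by (rule card_UN_le[OF finS])
    also have "\<dots> = (\<Sum>S\<in>{S. S \<subseteq> A \<and> card S = T}. card B ^ (card A - T))"
    proof (rule sum.cong)
      fix S assume S: "S \<in> {S. S \<subseteq> A \<and> card S = T}"
      have "\<forall>x\<in>S. {f x} \<subseteq> B" using f S unfolding P_def by (auto simp: PiE_def Pi_def)
      then show "card {c \<in> P. \<forall>x\<in>S. c x \<in> {f x}} = card B ^ (card A - T)"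
        using card_PiE_restrict[OF finA, of S "\<lambda>x. {f x}" B] S unfolding P_def by simp
    qed simp
    also have "\<dots> = \<beta>" unfolding \<beta>_def using n_subsets[OF finA, of T] by simp
    finally show ?thesis .
  qed
  let ?Is = "{I. I \<subseteq> {..<k} \<and> card I = L}"
  have finI: "finite ?Is" by simp
  have sub: "{w \<in> \<Omega>. \<exists>f\<in>P. \<exists>I. I \<subseteq> {..<k} \<and> card I = L \<and>
            (\<forall>i\<in>I. \<exists>S. S \<subseteq> A \<and> card S = T \<and> (\<forall>x\<in>S. w i x = f x))}
        \<subseteq> (\<Union>f\<in>P. \<Union>I\<in>?Is. {w \<in> \<Omega>. \<forall>i\<in>I. w i \<in> Q f})"
  proof
    fix w assume "w \<in> {w \<in> \<Omega>. \<exists>f\<in>P. \<exists>I. I \<subseteq> {..<k} \<and> card I = L \<and>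
            (\<forall>i\<in>I. \<exists>S. S \<subseteq> A \<and> card S = T \<and> (\<forall>x\<in>S. w i x = f x))}"
    then obtain f I where w: "w \<in> \<Omega>" and f: "f \<in> P" and I: "I \<subseteq> {..<k}" "card I = L"
      and S: "\<forall>i\<in>I. \<exists>S. S \<subseteq> A \<and> card S = T \<and> (\<forall>x\<in>S. w i x = f x)" by blast
    have "\<forall>i\<in>I. w i \<in> Q f"
    proof
      fix i assume i: "i \<in> I"
      then obtain S where "S \<subseteq> A" "card S = T" "\<forall>x\<in>S. w i x = f x" using S by blast
      moreover have "w i \<in> P" using w i I unfolding \<Omega>_def by auto
      ultimately show "w i \<in> Q f" unfolding Q_def by blast
    qed
    then show "w \<in> (\<Union>f\<in>P. \<Union>I\<in>?Is. {w \<in> \<Omega>. \<forall>i\<in>I. w i \<in> Q f})"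
      using w f I by blast
  qed
  have "card {w \<in> \<Omega>. \<exists>f\<in>P. \<exists>I. I \<subseteq> {..<k} \<and> card I = L \<and>
            (\<forall>i\<in>I. \<exists>S. S \<subseteq> A \<and> card S = T \<and> (\<forall>x\<in>S. w i x = f x))}
        \<le> card (\<Union>f\<in>P. \<Union>I\<in>?Is. {w \<in> \<Omega>. \<forall>i\<in>I. w i \<in> Q f})"
    by (rule card_mono[OF _ sub]) (rule finite_subset[OF _ fin\<Omega>], blast)
  also have "\<dots> \<le> (\<Sum>f\<in>P. card (\<Union>I\<in>?Is. {w \<in> \<Omega>. \<forall>i\<in>I. w i \<in> Q f}))"
    by (rule card_UN_le[OF finP])
  also have "\<dots> \<le> (\<Sum>f\<in>P. (\<Sum>I\<in>?Is. card {w \<in> \<Omega>. \<forall>i\<in>I. w i \<in> Q f}))"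
    by (rule sum_mono) (rule card_UN_le[OF finI])
  also have "\<dots> \<le> (\<Sum>f\<in>P. (\<Sum>I\<in>?Is. \<beta> ^ L * card P ^ (k - L)))"
  proof (intro sum_mono)
    fix f I assume f: "f \<in> P" and I: "I \<in> ?Is"
    have "card {w \<in> \<Omega>. \<forall>i\<in>I. w i \<in> Q f} = card (Q f) ^ L * card P ^ (k - L)"
      unfolding \<Omega>_def using card_seq_restrict[of I k "Q f" P] I QP by simp
    also have "\<dots> \<le> \<beta> ^ L * card P ^ (k - L)"
      by (intro mult_right_mono power_mono cQ f) auto
    finally show "card {w \<in> \<Omega>. \<forall>i\<in>I. w i \<in> Q f} \<le> \<beta> ^ L * card P ^ (k - L)" .
  qed
  also have "\<dots> = card P * ((k choose L) * (\<beta> ^ L * card P ^ (k - L)))"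
    using n_subsets[of "{..<k}" L] by simp
  finally show ?thesis unfolding \<Omega>_def P_def \<beta>_def .
qed

lemma card_bad2:
  fixes A :: "'a set" and B :: "'b set"
  assumes finA: "finite A" and finB: "finite B"
  shows "card {w \<in> {..<k} \<rightarrow>\<^sub>E (A \<rightarrow>\<^sub>E B). \<exists>b\<in>B. \<exists>U. U \<subseteq> A \<and> card U = u \<and>
            (\<exists>I. I \<subseteq> {..<k} \<and> card I = s \<and> (\<forall>i\<in>I. \<forall>a\<in>U. w i a \<noteq> b))}
     \<le> card B * ((card A choose u) * ((k choose s) * (((card B - 1) ^ u * card B ^ (card A - u)) ^ s
          * card (A \<rightarrow>\<^sub>E B) ^ (k - s))))"
proof -
  define P where "P = A \<rightarrow>\<^sub>E B"
  define \<Omega> where "\<Omega> = {..<k} \<rightarrow>\<^sub>E P"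
  define Q where "Q b U = {c \<in> P. \<forall>x\<in>U. c x \<in> B - {b}}" for b and U :: "'a set"
  define \<gamma> where "\<gamma> = (card B - 1) ^ u * card B ^ (card A - u)"
  have finP: "finite P" unfolding P_def using finA finB by (simp add: finite_PiE)
  have fin\<Omega>: "finite \<Omega>" unfolding \<Omega>_def using finP by (simp add: finite_PiE)
  let ?Us = "{U. U \<subseteq> A \<and> card U = u}"
  let ?Is = "{I. I \<subseteq> {..<k} \<and> card I = s}"
  have finU: "finite ?Us" using finA by simp
  have finI: "finite ?Is" by simp
  have QP: "Q b U \<subseteq> P" for b U unfolding Q_def by auto
  have cQ: "card (Q b U) = \<gamma>" if b: "b \<in> B" and U: "U \<in> ?Us" for b U
    using card_PiE_restrict[OF finA, of U "\<lambda>_. B - {b}" B] U b finB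
    unfolding Q_def P_def \<gamma>_def by simp
  have sub: "{w \<in> \<Omega>. \<exists>b\<in>B. \<exists>U. U \<subseteq> A \<and> card U = u \<and>
            (\<exists>I. I \<subseteq> {..<k} \<and> card I = s \<and> (\<forall>i\<in>I. \<forall>a\<in>U. w i a \<noteq> b))}
        \<subseteq> (\<Union>b\<in>B. \<Union>U\<in>?Us. \<Union>I\<in>?Is. {w \<in> \<Omega>. \<forall>i\<in>I. w i \<in> Q b U})"
  proof
    fix w assume "w \<in> {w \<in> \<Omega>. \<exists>b\<in>B. \<exists>U. U \<subseteq> A \<and> card U = u \<and>
            (\<exists>I. I \<subseteq> {..<k} \<and> card I = s \<and> (\<forall>i\<in>I. \<forall>a\<in>U. w i a \<noteq> b))}"
    then obtain b U I where w: "w \<in> \<Omega>" and b: "b \<in> B" and U: "U \<subseteq> A" "card U = u"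
      and I: "I \<subseteq> {..<k}" "card I = s" and av: "\<forall>i\<in>I. \<forall>a\<in>U. w i a \<noteq> b" by blast
    have "\<forall>i\<in>I. w i \<in> Q b U"
    proof
      fix i assume i: "i \<in> I"
      have "w i \<in> P" using w i I unfolding \<Omega>_def by auto
      then show "w i \<in> Q b U" using av i U unfolding Q_def P_def by (auto simp: PiE_def Pi_def)
    qed
    then show "w \<in> (\<Union>b\<in>B. \<Union>U\<in>?Us. \<Union>I\<in>?Is. {w \<in> \<Omega>. \<forall>i\<in>I. w i \<in> Q b U})"
      using w b U I by blast
  qed
  have "card {w \<in> \<Omega>. \<exists>b\<in>B. \<exists>U. U \<subseteq> A \<and> card U = u \<and>
            (\<exists>I. I \<subseteq> {..<k} \<and> card I = s \<and> (\<forall>i\<in>I. \<forall>a\<in>U. w i a \<noteq> b))}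
        \<le> card (\<Union>b\<in>B. \<Union>U\<in>?Us. \<Union>I\<in>?Is. {w \<in> \<Omega>. \<forall>i\<in>I. w i \<in> Q b U})"
    by (rule card_mono[OF _ sub]) (rule finite_subset[OF _ fin\<Omega>], blast)
  also have "\<dots> \<le> (\<Sum>b\<in>B. card (\<Union>U\<in>?Us. \<Union>I\<in>?Is. {w \<in> \<Omega>. \<forall>i\<in>I. w i \<in> Q b U}))"
    by (rule card_UN_le[OF finB])
  also have "\<dots> \<le> (\<Sum>b\<in>B. \<Sum>U\<in>?Us. card (\<Union>I\<in>?Is. {w \<in> \<Omega>. \<forall>i\<in>I. w i \<in> Q b U}))"
    by (rule sum_mono) (rule card_UN_le[OF finU])
  also have "\<dots> \<le> (\<Sum>b\<in>B. \<Sum>U\<in>?Us. \<Sum>I\<in>?Is. card {w \<in> \<Omega>. \<forall>i\<in>I. w i \<in> Q b U})"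
    by (intro sum_mono) (rule card_UN_le[OF finI])
  also have "\<dots> = (\<Sum>b\<in>B. \<Sum>U\<in>?Us. \<Sum>I\<in>?Is. \<gamma> ^ s * card P ^ (k - s))"
  proof (intro sum.cong refl)
    fix b U I assume b: "b \<in> B" and U: "U \<in> ?Us" and I: "I \<in> ?Is"
    show "card {w \<in> \<Omega>. \<forall>i\<in>I. w i \<in> Q b U} = \<gamma> ^ s * card P ^ (k - s)"
      unfolding \<Omega>_def using card_seq_restrict[of I k "Q b U" P] I QP cQ[OF b U] by simp
  qed
  also have "\<dots> = card B * ((card A choose u) * ((k choose s) * (\<gamma> ^ s * card P ^ (k - s))))"
    using n_subsets[of "{..<k}" s] n_subsets[OF finA, of u] by simp
  finally show ?thesis unfolding \<Omega>_def P_def \<gamma>_def .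
qed

lemma card_idx:
  assumes inj: "inj_on w {..<k}" and R: "R \<subseteq> w ` {..<k}"
  shows "card {i \<in> {..<k}. w i \<in> R} = card R"
proof -
  have "w ` {i \<in> {..<k}. w i \<in> R} = R" using R by auto
  moreover have "inj_on w {i \<in> {..<k}. w i \<in> R}" using inj by (rule inj_on_subset) auto
  ultimately show ?thesis using card_image by metis
qed

lemma good_C:
  fixes A :: "'a set" and B :: "'b set" and \<epsilon> \<Phi> :: real and k L T u s :: nat
  assumes finA: "finite A" and finB: "finite B"
    and w: "w \<in> {..<k} \<rightarrow>\<^sub>E (A \<rightarrow>\<^sub>E B)" and inj: "inj_on w {..<k}"
    and nb1: "\<not> (\<exists>f\<in>A \<rightarrow>\<^sub>E B. \<exists>I. I \<subseteq> {..<k} \<and> card I = L \<and>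
            (\<forall>i\<in>I. \<exists>S. S \<subseteq> A \<and> card S = T \<and> (\<forall>x\<in>S. w i x = f x)))"
    and nb2: "\<not> (\<exists>b\<in>B. \<exists>U. U \<subseteq> A \<and> card U = u \<and>
            (\<exists>I. I \<subseteq> {..<k} \<and> card I = s \<and> (\<forall>i\<in>I. \<forall>a\<in>U. w i a \<noteq> b)))"
    and T: "T = nat \<lceil>4 * real (card A) / real (card B)\<rceil>"
    and L1: "L \<ge> 1" and L: "\<Phi> * (real L - 1) \<le> real k / 4"
    and s: "s = nat \<lceil>real k / 2\<rceil>"
    and u1: "u \<ge> 1" and u: "real u - 1 \<le> \<epsilon> * real (card A)"
  shows "\<forall>F H. F \<subseteq> A \<rightarrow>\<^sub>E B \<longrightarrow> real (card F) \<le> \<Phi> \<longrightarrow>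
        (\<forall>b\<in>B. real (card (H b \<inter> w ` {..<k})) \<le> real (card (w ` {..<k})) / 4) \<longrightarrow>
        real (card {(a, b) \<in> A \<times> B. \<not> (\<exists>c\<in>w ` {..<k}. covers A B F H c a b)})
          \<le> \<epsilon> * real (card A) * real (card B)"
proof (intro allI impI)
  fix F H
  assume FP: "F \<subseteq> A \<rightarrow>\<^sub>E B" and cF: "real (card F) \<le> \<Phi>"
    and Hb: "\<forall>b\<in>B. real (card (H b \<inter> w ` {..<k})) \<le> real (card (w ` {..<k})) / 4"
  define C where "C = w ` {..<k}"
  have cC: "card C = k" unfolding C_def using inj by (simp add: card_image)
  have finC: "finite C" unfolding C_def by simp
  have CP: "C \<subseteq> A \<rightarrow>\<^sub>E B" unfolding C_def using w by auto
  have finF: "finite F" using finite_subset[OF FP] finA finB by (simp add: finite_PiE)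
  define R where "R f = {c \<in> C. 4 * real (card A) / real (card B) \<le> real (card {x\<in>A. c x = f x})}" for f
  have cR: "card (R f) \<le> L - 1" if f: "f \<in> F" for f
  proof (rule ccontr)
    assume "\<not> card (R f) \<le> L - 1"
    hence "L \<le> card (R f)" by simp
    then obtain R' where R': "R' \<subseteq> R f" "card R' = L" by (meson obtain_subset_with_card_n)
    define I where "I = {i \<in> {..<k}. w i \<in> R'}"
    have cI: "card I = L" unfolding I_def using card_idx[OF inj, of R'] R' unfolding R_def C_def by auto
    have "\<forall>i\<in>I. \<exists>S. S \<subseteq> A \<and> card S = T \<and> (\<forall>x\<in>S. w i x = f x)"
    proof
      fix i assume "i \<in> I"
      hence "w i \<in> R f" using R' unfolding I_def by auto
      hence "4 * real (card A) / real (card B) \<le> real (card {x\<in>A. w i x = f x})" unfolding R_def by auto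
      hence "T \<le> card {x\<in>A. w i x = f x}" unfolding T by (simp add: nat_le_iff ceiling_le_iff)
      then obtain S where "S \<subseteq> {x\<in>A. w i x = f x}" "card S = T" by (meson obtain_subset_with_card_n)
      thus "\<exists>S. S \<subseteq> A \<and> card S = T \<and> (\<forall>x\<in>S. w i x = f x)" by auto
    qed
    moreover have "I \<subseteq> {..<k}" unfolding I_def by auto
    ultimately have "\<exists>f\<in>A \<rightarrow>\<^sub>E B. \<exists>I. I \<subseteq> {..<k} \<and> card I = L \<and>
            (\<forall>i\<in>I. \<exists>S. S \<subseteq> A \<and> card S = T \<and> (\<forall>x\<in>S. w i x = f x))"
      using cI f FP by (intro bexI[of _ f] exI[of _ I]) auto
    with nb1 show False by (rule notE)
  qed
  define Rej where "Rej = {c \<in> C. rejects A B F c}"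
  have "Rej \<subseteq> (\<Union>f\<in>F. R f)" unfolding Rej_def R_def rejects_def by auto
  hence "card Rej \<le> card (\<Union>f\<in>F. R f)" by (intro card_mono) (auto simp: R_def finC finF)
  also have "\<dots> \<le> (\<Sum>f\<in>F. card (R f))" by (rule card_UN_le[OF finF])
  also have "\<dots> \<le> (\<Sum>f\<in>F. L - 1)" by (rule sum_mono) (rule cR)
  also have "\<dots> = card F * (L - 1)" by simp
  finally have "real (card Rej) \<le> real (card F) * (real L - 1)"
    using L1 by (metis of_nat_diff of_nat_le_iff of_nat_mult of_nat_1)
  also have "\<dots> \<le> \<Phi> * (real L - 1)" using cF L1 by (intro mult_right_mono) auto
  finally have cRej: "real (card Rej) \<le> real k / 4" using L by linarith
  define Unc where "Unc b = {a \<in> A. \<not> (\<exists>c\<in>C. covers A B F H c a b)}" for b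
  have cU: "real (card (Unc b)) \<le> \<epsilon> * real (card A)" if b: "b \<in> B" for b
  proof -
    define G where "G = {c \<in> C. \<not> rejects A B F c \<and> c \<notin> H b}"
    have "C \<subseteq> G \<union> Rej \<union> (H b \<inter> C)" unfolding G_def Rej_def by auto
    hence "card C \<le> card (G \<union> Rej \<union> (H b \<inter> C))" by (intro card_mono) (auto simp: G_def Rej_def finC)
    also have "\<dots> \<le> card G + card Rej + card (H b \<inter> C)"
      using card_Un_le[of "G \<union> Rej" "H b \<inter> C"] card_Un_le[of G Rej] by linarith
    finally have "real k \<le> real (card G) + real (card Rej) + real (card (H b \<inter> C))"
      using cC by linarith
    moreover have "real (card (H b \<inter> C)) \<le> real k / 4" using Hb b cC unfolding C_def by auto
    ultimately have "real k / 2 \<le> real (card G)" using cRej by linarith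
    hence sG: "s \<le> card G" unfolding s by (simp add: nat_le_iff ceiling_le_iff)
    have GC: "G \<subseteq> C" unfolding G_def by auto
    define I' where "I' = {i \<in> {..<k}. w i \<in> G}"
    have cI': "card I' = card G" unfolding I'_def using card_idx[OF inj, of G] GC unfolding C_def by auto
    then obtain I where I: "I \<subseteq> I'" "card I = s" using sG by (metis obtain_subset_with_card_n)
    have avoid: "\<forall>i\<in>I. \<forall>a\<in>Unc b. w i a \<noteq> b"
    proof (intro ballI)
      fix i a assume i: "i \<in> I" and a: "a \<in> Unc b"
      have wG: "w i \<in> G" and wC: "w i \<in> C" using i I GC unfolding I'_def by auto
      show "w i a \<noteq> b"
      proof
        assume "w i a = b"
        hence "covers A B F H (w i) a b" using wG unfolding G_def covers_def by auto
        thus False using a wC unfolding Unc_def by auto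
      qed
    qed
    have "\<not> (u \<le> card (Unc b))"
    proof
      assume "u \<le> card (Unc b)"
      then obtain U where U: "U \<subseteq> Unc b" "card U = u" by (meson obtain_subset_with_card_n)
      have "U \<subseteq> A" using U unfolding Unc_def by auto
      have avoidU: "\<forall>i\<in>I. \<forall>a\<in>U. w i a \<noteq> b" using avoid U(1) by auto
      moreover have "I \<subseteq> {..<k}" using I unfolding I'_def by auto
      ultimately have "\<exists>b\<in>B. \<exists>U. U \<subseteq> A \<and> card U = u \<and>
            (\<exists>I. I \<subseteq> {..<k} \<and> card I = s \<and> (\<forall>i\<in>I. \<forall>a\<in>U. w i a \<noteq> b))"
        using b U I \<open>I \<subseteq> {..<k}\<close> \<open>U \<subseteq> A\<close> avoidU by (intro bexI[of _ b] exI[of _ U] conjI exI[of _ I]) auto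
      with nb2 show False by (rule notE)
    qed
    hence "card (Unc b) + 1 \<le> u" by simp
    hence "real (card (Unc b)) \<le> real u - 1" using of_nat_le_iff[of "card (Unc b) + 1" u, where 'a=real] by simp
    thus ?thesis using u by linarith
  qed
  have "{(a, b) \<in> A \<times> B. \<not> (\<exists>c\<in>C. covers A B F H c a b)} \<subseteq> (\<Union>b\<in>B. (\<lambda>a. (a, b)) ` Unc b)"
    unfolding Unc_def by auto
  hence "card {(a, b) \<in> A \<times> B. \<not> (\<exists>c\<in>C. covers A B F H c a b)} \<le> card (\<Union>b\<in>B. (\<lambda>a. (a, b)) ` Unc b)"
    by (intro card_mono) (auto simp: Unc_def finA finB)
  also have "\<dots> \<le> (\<Sum>b\<in>B. card ((\<lambda>a. (a, b)) ` Unc b))" by (rule card_UN_le[OF finB])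
  also have "\<dots> \<le> (\<Sum>b\<in>B. card (Unc b))" by (intro sum_mono card_image_le) (auto simp: Unc_def finA)
  finally have "real (card {(a, b) \<in> A \<times> B. \<not> (\<exists>c\<in>C. covers A B F H c a b)}) \<le> real (\<Sum>b\<in>B. card (Unc b))"
    by (rule of_nat_mono)
  also have "\<dots> = (\<Sum>b\<in>B. real (card (Unc b)))" by simp
  also have "\<dots> \<le> (\<Sum>b\<in>B. \<epsilon> * real (card A))" by (rule sum_mono) (rule cU)
  also have "\<dots> = \<epsilon> * real (card A) * real (card B)" by simp
  finally show "real (card {(a, b) \<in> A \<times> B. \<not> (\<exists>c\<in>w ` {..<k}. covers A B F H c a b)}) \<le> \<epsilon> * real (card A) * real (card B)"
    unfolding C_def .
qed

lemma "441 * 3628800 * (4/3::real)^10 \<le> (64/3)^8" by (simp add: power_divide)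
lemma exp_ge_pow_fact:
  fixes x :: real assumes "0 \<le> x" shows "x ^ j / fact j \<le> exp x"
proof -
  have s: "(\<lambda>i. x ^ i / fact i) sums exp x" using exp_converges[of x] by (simp add: divide_inverse mult.commute)
  have "(\<Sum>i\<in>{j}. x ^ i / fact i) \<le> (\<Sum>i. x ^ i / fact i)"
    by (rule sum_le_suminf) (use s assms in \<open>auto simp: sums_iff\<close>)
  thus ?thesis using s by (simp add: sums_iff)
qed
lemma binom_le:
  fixes N r :: nat assumes r: "0 < r"
  shows "real (N choose r) \<le> (exp 1 * real N / real r) ^ r"
proof -
  have a: "real (N choose r) * fact r \<le> real N ^ r"
    using binomial_fact_pow[of N r] by (metis of_nat_fact of_nat_le_iff of_nat_mult of_nat_power)
  have b: "real r ^ r / fact r \<le> exp 1 ^ r"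
    using exp_ge_pow_fact[of "real r" r] exp_of_nat_mult[of r "1::real"] by simp
  have fp: "(0::real) < fact r" by simp
  have rp: "0 < real r ^ r" using r by simp
  have "real (N choose r) \<le> real N ^ r / fact r" using a fp by (simp add: field_simps)
  also have "\<dots> \<le> real N ^ r * (exp 1 ^ r / real r ^ r)"
  proof -
    have "1 / fact r \<le> exp 1 ^ r / real r ^ r" using b fp rp by (simp add: field_simps)
    thus ?thesis by (simp add: divide_inverse mult_left_mono)
  qed
  also have "\<dots> = (exp 1 * real N / real r) ^ r" by (simp add: power_mult_distrib power_divide)
  finally show ?thesis .
qed
lemma numD:
  fixes n m k :: nat and \<epsilon> \<Phi> :: real
  assumes m2: "2 \<le> m" and nm: "16 * m \<le> n" and eps: "4 * real m / real n \<le> \<epsilon>"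
    and Phi1: "1 \<le> \<Phi>" and Phi2: "\<Phi> \<le> 2 powr (real n / (4 * real m))"
    and kK: "real k \<le> max (20 * real m / \<epsilon>) (max (6 * \<Phi> * log 2 (real m) / \<epsilon>)
                   (6 * \<Phi> * real m * log 2 (real m))) + 1"
  shows "4 * (real k * real k) \<le> real m ^ n"
proof -
  define nr where "nr = real n"
  define mr where "mr = real m"
  have mr2: "2 \<le> mr" unfolding mr_def using m2 by simp
  have nm': "16 * mr \<le> nr" unfolding mr_def nr_def using nm by simp
  have nr32: "32 \<le> nr" using mr2 nm' by linarith
  have epos: "0 < \<epsilon>" using eps mr2 nr32 unfolding mr_def nr_def
    by (smt (verit) divide_pos_pos)
  define c where "c = ln (2::real)"
  have c1: "2/3 \<le> c" unfolding c_def by (rule ln2_ge_two_thirds)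
  have c2: "c < 1" unfolding c_def by (rule ln_2_less_1)
  define lam where "lam = ln mr"
  have clam: "c \<le> lam" unfolding c_def lam_def using mr2 by simp
  define l where "l = log 2 mr"
  have l_eq: "l = lam / c" unfolding l_def lam_def c_def by (simp add: log_def)
  have l1: "1 \<le> l" unfolding l_eq using clam c1 by simp
  have ie: "1 / \<epsilon> \<le> nr / (4 * mr)"
  proof -
    have "4 * mr / nr \<le> \<epsilon>" using eps unfolding mr_def nr_def .
    moreover have "0 < 4 * mr / nr" using mr2 nr32 by simp
    ultimately have "inverse \<epsilon> \<le> inverse (4 * mr / nr)" by (rule le_imp_inverse_le)
    thus ?thesis by (simp add: inverse_eq_divide)
  qed
  have t1: "20 * mr / \<epsilon> \<le> 5 * nr"
  proof -
    have "20 * mr / \<epsilon> = 20 * mr * (1 / \<epsilon>)" by simp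
    also have "\<dots> \<le> 20 * mr * (nr / (4 * mr))" by (rule mult_left_mono[OF ie]) (use mr2 in simp)
    also have "\<dots> = 5 * nr" using mr2 by simp
    finally show ?thesis .
  qed
  have Phl: "1 \<le> \<Phi> * l" using Phi1 l1 by (metis mult_mono' mult_1 zero_le_one)
  have Pln: "0 \<le> \<Phi> * (l * nr)" "0 \<le> \<Phi> * l * nr" using Phl nr32 by (simp_all add: mult.assoc[symmetric])
  have t2: "6 * \<Phi> * l / \<epsilon> \<le> (9/8) * (\<Phi> * l * nr)"
  proof -
    have "6 * \<Phi> * l / \<epsilon> = 6 * (\<Phi> * l) * (1 / \<epsilon>)" by simp
    also have "\<dots> \<le> 6 * (\<Phi> * l) * (nr / (4 * mr))" by (rule mult_left_mono[OF ie]) (use Phl in simp)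
    also have "\<dots> = (3/2) * (\<Phi> * l * nr) / mr" using mr2 by simp
    also have "\<dots> \<le> (3/2) * (\<Phi> * l * nr) / 2" using mr2 Phl nr32 by (intro divide_left_mono) auto
    also have "\<dots> \<le> (9/8) * (\<Phi> * l * nr)" using Phl nr32 mult_nonneg_nonneg[of "\<Phi>*l" nr] by (simp add: mult.assoc)
    finally show ?thesis .
  qed
  have t3: "6 * \<Phi> * mr * l \<le> (9/8) * (\<Phi> * l * nr)"
  proof -
    have "6 * \<Phi> * mr * l = 6 * (\<Phi> * l) * mr" by simp
    also have "\<dots> \<le> 6 * (\<Phi> * l) * (nr / 16)" using nm' Phl by (intro mult_left_mono) auto
    also have "\<dots> \<le> (9/8) * (\<Phi> * l * nr)"
    proof -
      have "6 * (\<Phi> * l) * (nr / 16) = (3/8) * (\<Phi> * l * nr)" by (simp add: algebra_simps)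
      thus ?thesis using Pln(2) by linarith
    qed
    finally show ?thesis .
  qed
  have t1': "5 * nr \<le> 5 * (\<Phi> * l * nr)" using Phl nr32 Pln by simp
  have k7: "real k \<le> 7 * (\<Phi> * l * nr)"
  proof -
    have "real k \<le> max (20 * mr / \<epsilon>) (max (6 * \<Phi> * l / \<epsilon>) (6 * \<Phi> * mr * l)) + 1"
      using kK unfolding mr_def l_def .
    also have "\<dots> \<le> (49/8) * (\<Phi> * l * nr) + 1"
    proof -
      have "max (20 * mr / \<epsilon>) (max (6 * \<Phi> * l / \<epsilon>) (6 * \<Phi> * mr * l)) \<le> (49/8) * (\<Phi> * l * nr)"
      proof (intro max.boundedI)
        show "20 * mr / \<epsilon> \<le> (49/8) * (\<Phi> * l * nr)" using t1 t1' Pln(2) by linarith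
        show "6 * \<Phi> * l / \<epsilon> \<le> (49/8) * (\<Phi> * l * nr)" using t2 Pln(2) by linarith
        show "6 * \<Phi> * mr * l \<le> (49/8) * (\<Phi> * l * nr)" using t3 Pln(2) by linarith
      qed
      thus ?thesis by linarith
    qed
    also have "\<dots> \<le> 7 * (\<Phi> * l * nr)"
    proof -
      have "1 * 32 \<le> (\<Phi> * l) * nr" using Phl nr32 by (intro mult_mono) auto
      thus ?thesis by linarith
    qed
    finally show ?thesis .
  qed
  define w where "w = nr * lam"
  have w1: "64 / 3 \<le> w" unfolding w_def
  proof -
    have "32 * (2/3) \<le> nr * lam" using nr32 clam c1 by (intro mult_mono) auto
    thus "64 / 3 \<le> nr * lam" by simp
  qed
  have lnw: "l * nr \<le> (3/2) * w"
  proof -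
    have "l * nr = w / c" unfolding l_eq w_def by simp
    also have "\<dots> \<le> w / (2/3)" using c1 w1 by (intro divide_left_mono) auto
    finally show ?thesis by simp
  qed
  have k10: "real k \<le> (21/2) * \<Phi> * w"
  proof -
    have "7 * (\<Phi> * l * nr) = 7 * \<Phi> * (l * nr)" by simp
    also have "\<dots> \<le> 7 * \<Phi> * ((3/2) * w)" using lnw Phi1 by (intro mult_left_mono) auto
    finally show ?thesis using k7 by simp
  qed
  have Phe: "\<Phi> \<le> exp (c * nr / (4 * mr))"
    using Phi2 unfolding powr_def c_def nr_def mr_def by (simp add: mult.commute)
  have Phi_sq: "\<Phi> * \<Phi> \<le> exp (w / 4)"
  proof -
    have "\<Phi> * \<Phi> \<le> exp (c * nr / (4 * mr)) * exp (c * nr / (4 * mr))"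
      using Phe Phi1 by (intro mult_mono) auto
    also have "\<dots> = exp (c * nr / (2 * mr))" by (simp flip: exp_add)
    also have "\<dots> \<le> exp (w / 4)"
    proof -
      have "c * nr / (2 * mr) \<le> c * nr / 4" using mr2 c1 nr32 by (intro divide_left_mono) auto
      also have "\<dots> \<le> w / 4" unfolding w_def using clam nr32 by (simp add: mult.commute mult_left_mono)
      finally show ?thesis by simp
    qed
    finally show ?thesis .
  qed
  have poly: "441 * (w * w) \<le> exp (3 * w / 4)"
  proof -
    have "(64/3::real) ^ 8 \<le> w ^ 8" using w1 by (intro power_mono) auto
    hence "441 * 3628800 * (4/3::real)^10 \<le> w ^ 8" by (simp add: power_divide)
    hence "441 * 3628800 * (4/3::real)^10 * (w * w) \<le> w ^ 8 * (w * w)" by (rule mult_right_mono) simp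
    also have "w ^ 8 * (w * w) = w ^ 10" using power_add[of w 8 2] by (simp add: power2_eq_square)
    finally have h: "441 * 3628800 * (4/3::real)^10 * (w * w) \<le> w ^ 10" .
    have "441 * (w * w) = (3/4)^10 * (441 * 3628800 * (4/3::real)^10 * (w * w)) / 3628800"
      by (simp add: power_divide)
    also have "\<dots> \<le> (3/4)^10 * w ^ 10 / 3628800"
      using h by (intro divide_right_mono mult_left_mono) auto
    also have "\<dots> = (3 * w / 4) ^ 10 / fact 10" by (simp add: power_divide power_mult_distrib fact_numeral)
    also have "\<dots> \<le> exp (3 * w / 4)" by (rule exp_ge_pow_fact) (use w1 in simp)
    finally show ?thesis .
  qed
  have "4 * (real k * real k) \<le> 4 * (((21/2) * \<Phi> * w) * ((21/2) * \<Phi> * w))"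
    using k10 by (intro mult_left_mono mult_mono) auto
  also have "\<dots> = 441 * (w * w) * (\<Phi> * \<Phi>)" by (simp add: algebra_simps)
  also have "\<dots> \<le> exp (3 * w / 4) * exp (w / 4)"
    using poly Phi_sq by (intro mult_mono) auto
  also have "\<dots> = exp w" by (simp flip: exp_add)
  also have "\<dots> = real m ^ n" unfolding w_def lam_def nr_def mr_def
    using m2 by (simp add: exp_of_nat_mult)
  finally show ?thesis .
qed

lemma exp2_ge4: "(4::real) \<le> exp 2"
  using exp_lower_Taylor_quadratic[of "2::real"] by simp

lemma numB1:
  fixes n m k L T :: nat and \<Phi> :: real
  assumes m2: "2 \<le> m" and nm: "16 * m \<le> n"
    and Phi1: "1 \<le> \<Phi>" and Phi2: "\<Phi> \<le> 2 powr (real n / (4 * real m))"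
    and L1: "1 \<le> L" and kL: "real k \<le> 4 * \<Phi> * real L"
    and Ll: "(3/2) * real m * log 2 (real m) \<le> real L"
    and T: "4 * real n / real m \<le> real T"
  shows "real m ^ n * real (k choose L) * (real (n choose T) / real m ^ T) ^ L \<le> 1/4"
proof -
  define nr where "nr = real n"
  define mr where "mr = real m"
  have mr2: "2 \<le> mr" unfolding mr_def using m2 by simp
  have nm': "16 * mr \<le> nr" unfolding mr_def nr_def using nm by simp
  have nr32: "32 \<le> nr" using mr2 nm' by linarith
  define z where "z = nr / mr"
  have z16: "16 \<le> z" unfolding z_def using nm' mr2 by (simp add: field_simps)
  have zmr: "z * mr = nr" unfolding z_def using mr2 by simp
  define c where "c = ln (2::real)"
  have c1: "2/3 \<le> c" unfolding c_def by (rule ln2_ge_two_thirds)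
  have c2: "c < 1" unfolding c_def by (rule ln_2_less_1)
  define lam where "lam = ln mr"
  have clam: "c \<le> lam" unfolding c_def lam_def using mr2 by simp
  define l where "l = log 2 mr"
  have l_eq: "l = lam / c" unfolding l_def lam_def c_def by (simp add: log_def)
  have lam0: "0 \<le> lam" using clam c1 by linarith
  have "lam * c \<le> lam" using mult_left_mono[of c 1 lam] c2 lam0 by simp
  hence laml: "lam \<le> l" unfolding l_eq using c1 by (simp add: le_divide_eq)
  have Lpos: "0 < real L" using L1 by simp
  have Tz: "4 * z \<le> real T" using T unfolding z_def nr_def mr_def by simp
  have Tpos: "0 < T" using Tz z16 by simp
  have e4: "exp 1 / 4 = exp (1 - 2 * c)"
  proof -
    have "exp (2 * c) = 4" unfolding c_def using exp_add[of "ln 2" "ln (2::real)"] by simp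
    thus ?thesis by (simp add: exp_diff)
  qed
  have q: "real (n choose T) / mr ^ T \<le> exp (- (4/3) * z)"
  proof -
    have "real (n choose T) / mr ^ T \<le> (exp 1 * nr / real T) ^ T / mr ^ T"
      using binom_le[OF Tpos, of n] mr2 unfolding nr_def by (intro divide_right_mono) auto
    also have "\<dots> = (exp 1 * z / real T) ^ T" unfolding z_def using mr2
      by (simp add: power_divide power_mult_distrib mult.commute)
    also have "\<dots> \<le> (exp 1 / 4) ^ T"
    proof (rule power_mono)
      have "exp 1 * z / real T \<le> exp 1 * z / (4 * z)" using Tz z16 by (intro divide_left_mono) auto
      also have "\<dots> = exp 1 / 4" using z16 by simp
      finally show "exp 1 * z / real T \<le> exp 1 / 4" .
      show "0 \<le> exp 1 * z / real T" using z16 by simp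
    qed
    also have "\<dots> = exp (real T * (1 - 2 * c))" unfolding e4 by (simp add: exp_of_nat_mult)
    also have "\<dots> \<le> exp (- (4/3) * z)"
    proof -
      have "real T * (1 - 2 * c) \<le> real T * (- 1/3)" using c1 by (intro mult_left_mono) auto
      also have "\<dots> \<le> - (4/3) * z" using Tz by simp
      finally show ?thesis by simp
    qed
    finally show ?thesis .
  qed
  have bkL: "real (k choose L) \<le> (4 * exp 1 * \<Phi>) ^ L"
  proof -
    have "real (k choose L) \<le> (exp 1 * real k / real L) ^ L" using binom_le L1 by simp
    also have "\<dots> \<le> (4 * exp 1 * \<Phi>) ^ L"
    proof (rule power_mono)
      have "real k / real L \<le> 4 * \<Phi>" using kL Lpos by (simp add: divide_le_eq mult.commute)
      hence "exp 1 * (real k / real L) \<le> exp 1 * (4 * \<Phi>)" by (intro mult_left_mono) auto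
      thus "exp 1 * real k / real L \<le> 4 * exp 1 * \<Phi>" by simp
    qed simp
    finally show ?thesis .
  qed
  have Phe: "\<Phi> \<le> exp (c * z / 4)"
    using Phi2 unfolding powr_def c_def z_def nr_def mr_def by (simp add: mult.commute)
  have base: "4 * exp 1 * \<Phi> * exp (- (4/3) * z) \<le> exp (- (3/4) * z)"
  proof -
    have "4 * exp 1 * \<Phi> * exp (- (4/3) * z) \<le> exp (2 * c) * exp 1 * exp (c * z / 4) * exp (- (4/3) * z)"
    proof -
      have "exp (2 * c) = 4" unfolding c_def using exp_add[of "ln 2" "ln (2::real)"] by simp
      thus ?thesis using Phe by simp
    qed
    also have "\<dots> = exp (2 * c + 1 + c * z / 4 + (- (4/3) * z))" by (simp only: exp_add)
    also have "\<dots> = exp (2 * c + 1 + c * z / 4 - (4/3) * z)" by simp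
    also have "\<dots> \<le> exp (- (3/4) * z)"
    proof -
      have "c * z \<le> 1 * z" using c2 z16 by (intro mult_right_mono) auto
      hence "2 * c + 1 + c * z / 4 - (4/3) * z \<le> - (3/4) * z" using c2 z16 by linarith
      thus ?thesis by simp
    qed
    finally show ?thesis .
  qed
  have Cq: "real (k choose L) * (real (n choose T) / mr ^ T) ^ L \<le> exp (- (3/4) * z * real L)"
  proof -
    have "real (k choose L) * (real (n choose T) / mr ^ T) ^ L \<le> (4 * exp 1 * \<Phi>) ^ L * exp (- (4/3) * z) ^ L"
      using bkL q mr2 by (intro mult_mono power_mono) auto
    also have "\<dots> = (4 * exp 1 * \<Phi> * exp (- (4/3) * z)) ^ L" by (simp add: power_mult_distrib)
    also have "\<dots> \<le> exp (- (3/4) * z) ^ L" using base Phi1 by (intro power_mono) auto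
    also have "\<dots> = exp (- (3/4) * z * real L)" by (simp add: exp_of_nat_mult[symmetric] mult.commute)
    finally show ?thesis .
  qed
  have M: "mr ^ n = exp (nr * lam)" unfolding nr_def lam_def using mr2 by (simp add: exp_of_nat_mult)
  have zL: "(9/8) * (nr * lam) \<le> (3/4) * z * real L"
  proof -
    have "(3/2) * mr * l \<le> real L" using Ll unfolding mr_def l_def .
    hence "z * ((3/2) * mr * l) \<le> z * real L" using z16 by (intro mult_left_mono) auto
    moreover have "z * ((3/2) * mr * l) = (3/2) * nr * l" using zmr by (simp add: algebra_simps)
    moreover have "nr * lam \<le> nr * l" using laml nr32 by (intro mult_left_mono) auto
    ultimately show ?thesis by linarith
  qed
  have wl: "64/3 \<le> nr * lam"
  proof -
    have "32 * (2/3) \<le> nr * lam" using nr32 clam c1 by (intro mult_mono) auto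
    thus ?thesis by simp
  qed
  have "mr ^ n * real (k choose L) * (real (n choose T) / mr ^ T) ^ L
        = mr ^ n * (real (k choose L) * (real (n choose T) / mr ^ T) ^ L)" by simp
  also have "\<dots> \<le> exp (nr * lam) * exp (- (3/4) * z * real L)"
    unfolding M using Cq by (intro mult_left_mono) auto
  also have "\<dots> = exp (nr * lam + (- (3/4) * z * real L))" by (rule exp_add[symmetric])
  also have "\<dots> = exp (nr * lam - (3/4) * z * real L)" by simp
  also have "\<dots> \<le> exp (- 2)"
  proof -
    have "nr * lam - (3/4) * z * real L \<le> - 2" using zL wl by linarith
    thus ?thesis by simp
  qed
  also have "\<dots> \<le> 1/4" using exp2_ge4 by (simp add: exp_minus field_simps)
  finally show ?thesis unfolding mr_def nr_def .
qed

lemma numB2: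
  fixes n m k u s :: nat and \<epsilon> :: real
  assumes m2: "2 \<le> m" and nm: "16 * m \<le> n" and eps: "4 * real m / real n \<le> \<epsilon>"
    and u: "\<epsilon> * real n < real u" and ks: "real k \<le> 2 * real s"
    and s10: "10 * real m / \<epsilon> \<le> real s"
  shows "real m * real (n choose u) * real (k choose s) * ((real m - 1) / real m) ^ (u * s) \<le> 1/4"
proof -
  define nr where "nr = real n"
  define mr where "mr = real m"
  have mr2: "2 \<le> mr" unfolding mr_def using m2 by simp
  have nm': "16 * mr \<le> nr" unfolding mr_def nr_def using nm by simp
  have nr32: "32 \<le> nr" using mr2 nm' by linarith
  have epos: "0 < \<epsilon>" using eps mr2 nr32 unfolding mr_def nr_def
    by (smt (verit) divide_pos_pos)
  have en: "4 * mr \<le> \<epsilon> * nr" using eps nr32 unfolding mr_def nr_def by (simp add: divide_le_eq mult.commute)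
  have u': "\<epsilon> * nr < real u" using u unfolding nr_def .
  have upos: "0 < real u" using u' epos nr32 by (smt (verit) mult_pos_pos)
  hence upos': "0 < u" by simp
  have b1: "real (n choose u) \<le> exp (real u / \<epsilon>)"
  proof -
    have "real (n choose u) \<le> (exp 1 * nr / real u) ^ u" using binom_le[OF upos'] unfolding nr_def .
    also have "\<dots> \<le> exp (1 / \<epsilon>) ^ u"
    proof (rule power_mono)
      have "nr / real u \<le> 1 / \<epsilon>" using u' epos upos by (simp add: field_simps)
      hence "exp 1 * (nr / real u) \<le> exp 1 * (1 / \<epsilon>)" by (intro mult_left_mono) auto
      also have "exp 1 * (1 / \<epsilon>) \<le> exp 1 * exp (1 / \<epsilon> - 1)"
      proof (rule mult_left_mono)
        have "ln (1 / \<epsilon>) \<le> 1 / \<epsilon> - 1" by (rule ln_le_minus_one) (use epos in simp)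
        hence "exp (ln (1 / \<epsilon>)) \<le> exp (1 / \<epsilon> - 1)" by (simp only: exp_le_cancel_iff)
        thus "1 / \<epsilon> \<le> exp (1 / \<epsilon> - 1)" using epos by simp
      qed simp
      also have "\<dots> = exp (1 / \<epsilon>)" by (simp add: exp_diff)
      finally show "exp 1 * nr / real u \<le> exp (1 / \<epsilon>)" by simp
      show "0 \<le> exp 1 * nr / real u" using nr32 upos by simp
    qed
    also have "\<dots> = exp (real u / \<epsilon>)" using exp_of_nat_mult[of u "1/\<epsilon>"] by simp
    finally show ?thesis .
  qed
  have b2: "real (k choose s) \<le> exp (2 * real s)"
  proof -
    have "k \<le> 2 * s" using ks by linarith
    have "real (k choose s) \<le> 2 ^ k" using binomial_le_pow2[of k s] by (metis of_nat_le_iff of_nat_numeral of_nat_power)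
    also have "\<dots> \<le> 2 ^ (2 * s)" using \<open>k \<le> 2 * s\<close> by (intro power_increasing) auto
    also have "\<dots> = 4 ^ s" by (simp add: power_mult)
    also have "\<dots> \<le> exp 2 ^ s" using exp2_ge4 by (intro power_mono) auto
    also have "\<dots> = exp (2 * real s)" using exp_of_nat_mult[of s "2::real"] by (simp add: mult.commute)
    finally show ?thesis .
  qed
  have b3: "((mr - 1) / mr) ^ (u * s) \<le> exp (- (real u * real s / mr))"
  proof -
    have "(mr - 1) / mr = 1 + (- (1 / mr))" using mr2 by (simp add: field_simps)
    also have "\<dots> \<le> exp (- (1 / mr))" by (rule exp_ge_add_one_self)
    finally have "((mr - 1) / mr) ^ (u * s) \<le> exp (- (1 / mr)) ^ (u * s)"
      using mr2 by (intro power_mono) auto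
    also have "\<dots> = exp (real (u * s) * (- (1 / mr)))" by (rule exp_of_nat_mult[symmetric])
    also have "\<dots> = exp (- (real u * real s / mr))" by simp
    finally show ?thesis .
  qed
  have uu: "2 \<le> real u / (2 * mr)" using en u' mr2 by (simp add: field_simps)
  have ss: "5 / \<epsilon> \<le> real s / (2 * mr)"
  proof -
    have "10 * mr / \<epsilon> \<le> real s" using s10 unfolding mr_def .
    hence "10 * mr / \<epsilon> / (2 * mr) \<le> real s / (2 * mr)" using mr2 by (intro divide_right_mono) auto
    thus ?thesis using mr2 by simp
  qed
  have split: "real u * real s / mr = (real u / (2 * mr)) * real s + (real s / (2 * mr)) * real u"
    using mr2 by (simp add: field_simps)
  have p1: "2 * real s \<le> (real u / (2 * mr)) * real s" using uu by (intro mult_right_mono) auto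
  have p2: "5 / \<epsilon> * real u \<le> (real s / (2 * mr)) * real u" using ss upos by (intro mult_right_mono) auto
  have ue: "nr < real u / \<epsilon>" using u' epos by (simp add: field_simps)
  have expo: "real u / \<epsilon> + 2 * real s - real u * real s / mr \<le> - 4 * nr"
  proof -
    have "5 / \<epsilon> * real u = 5 * (real u / \<epsilon>)" by simp
    thus ?thesis using split p1 p2 ue by linarith
  qed
  have "mr * real (n choose u) * real (k choose s) * ((mr - 1) / mr) ^ (u * s)
        \<le> mr * exp (real u / \<epsilon>) * exp (2 * real s) * exp (- (real u * real s / mr))"
    using b1 b2 b3 mr2 by (intro mult_mono) auto
  also have "\<dots> = mr * exp (real u / \<epsilon> + 2 * real s - real u * real s / mr)"
    by (simp add: exp_add exp_diff exp_minus divide_inverse)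
  also have "\<dots> \<le> exp mr * exp (- 4 * nr)"
  proof (rule mult_mono)
    show "mr \<le> exp mr" using exp_ge_add_one_self[of mr] by linarith
  qed (use expo mr2 in auto)
  also have "\<dots> = exp (mr - 4 * nr)" by (simp add: exp_add[symmetric])
  also have "\<dots> \<le> exp (- 2)" using nm' mr2 by simp
  also have "\<dots> \<le> 1/4" using exp2_ge4 by (simp add: exp_minus field_simps)
  finally show ?thesis unfolding mr_def nr_def .
qed

theorem mainTheorem7:
  fixes A :: "'a set" and B :: "'b set" and \<epsilon> \<Phi> :: real
  assumes "finite A" and "finite B"
    and "card B \<ge> 2" and "card A \<ge> 16 * card B"
    and "\<epsilon> \<ge> 4 * real (card B) / real (card A)"
    and "1 \<le> \<Phi>" and "\<Phi> \<le> 2 powr (real (card A) / (4 * real (card B)))"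
  shows "\<exists>C. C \<subseteq> A \<rightarrow>\<^sub>E B \<and>
     card C = nat \<lceil>max (20 * real (card B) / \<epsilon>)
                   (max (6 * \<Phi> * log 2 (real (card B)) / \<epsilon>)
                        (6 * \<Phi> * real (card B) * log 2 (real (card B))))\<rceil> \<and>
     (\<forall>F H. F \<subseteq> A \<rightarrow>\<^sub>E B \<longrightarrow> real (card F) \<le> \<Phi> \<longrightarrow>
        (\<forall>b\<in>B. real (card (H b \<inter> C)) \<le> real (card C) / 4) \<longrightarrow>
        real (card {(a, b) \<in> A \<times> B. \<not> (\<exists>c\<in>C. covers A B F H c a b)})
          \<le> \<epsilon> * real (card A) * real (card B))"
proof -
  note finA = assms(1) and finB = assms(2) and m2 = assms(3) and nm = assms(4)
    and eps = assms(5) and Phi1 = assms(6) and Phi2 = assms(7)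
  define n where "n = card A"
  define m where "m = card B"
  define K where "K = max (20 * real (card B) / \<epsilon>)
                   (max (6 * \<Phi> * log 2 (real (card B)) / \<epsilon>)
                        (6 * \<Phi> * real (card B) * log 2 (real (card B))))"
  define k where "k = nat \<lceil>K\<rceil>"
  define L where "L = nat \<lfloor>real k / (4 * \<Phi>)\<rfloor> + 1"
  define T where "T = nat \<lceil>4 * real (card A) / real (card B)\<rceil>"
  define u where "u = nat \<lfloor>\<epsilon> * real (card A)\<rfloor> + 1"
  define s where "s = nat \<lceil>real k / 2\<rceil>"
  define P where "P = A \<rightarrow>\<^sub>E B"
  define \<Omega> where "\<Omega> = {..<k} \<rightarrow>\<^sub>E P"
  have mr2: "2 \<le> real m" unfolding m_def using m2 by simp
  have nr32: "32 \<le> real n" unfolding n_def using m2 nm by linarith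
  have epos: "0 < \<epsilon>" using eps mr2 nr32 unfolding m_def n_def
    by (smt (verit) divide_pos_pos)
  have Phipos: "0 < \<Phi>" using Phi1 by simp
  have K20: "20 * real m / \<epsilon> \<le> K" unfolding K_def m_def by simp
  have K6: "6 * \<Phi> * real m * log 2 (real m) \<le> K" unfolding K_def m_def by simp
  have Kpos: "0 < K" using K20 epos mr2 by (smt (verit) divide_pos_pos)
  have kK: "K \<le> real k" unfolding k_def using Kpos by simp
  have kK1: "real k \<le> K + 1" unfolding k_def using Kpos ceiling_correct[of K] by simp
  have "0 < real k" using kK Kpos by linarith
  hence k1: "1 \<le> k" by simp
  define x where "x = real k / (4 * \<Phi>)"
  have x0: "0 \<le> x" unfolding x_def using Phipos by simp
  have Lx: "real L = of_int \<lfloor>x\<rfloor> + 1" unfolding L_def x_def using x0[unfolded x_def] by simp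
  have L1: "1 \<le> L" unfolding L_def by simp
  have xL: "x \<le> real L" using Lx floor_correct[of x] by simp
  have Lx2: "real L - 1 \<le> x" using Lx by simp
  have kL: "real k \<le> 4 * \<Phi> * real L" using xL Phipos unfolding x_def by (simp add: field_simps)
  have LPhi: "\<Phi> * (real L - 1) \<le> real k / 4"
  proof -
    have "\<Phi> * (real L - 1) \<le> \<Phi> * x" using Lx2 Phipos by (intro mult_left_mono) auto
    also have "\<dots> = real k / 4" unfolding x_def using Phipos by simp
    finally show ?thesis .
  qed
  have Ll: "(3/2) * real m * log 2 (real m) \<le> real L"
  proof -
    have "(3/2) * real m * log 2 (real m) = 6 * \<Phi> * real m * log 2 (real m) / (4 * \<Phi>)"
      using Phipos by simp
    also have "\<dots> \<le> real k / (4 * \<Phi>)" using K6 kK Phipos by (intro divide_right_mono) auto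
    also have "\<dots> \<le> real L" using xL unfolding x_def .
    finally show ?thesis .
  qed
  have Tge: "4 * real n / real m \<le> real T" unfolding T_def n_def m_def by linarith
  have u1: "1 \<le> u" unfolding u_def by simp
  have ux: "real u = of_int \<lfloor>\<epsilon> * real (card A)\<rfloor> + 1" unfolding u_def
    using epos by simp
  have ugt: "\<epsilon> * real n < real u" using ux floor_correct[of "\<epsilon> * real (card A)"] unfolding n_def by simp
  have ule: "real u - 1 \<le> \<epsilon> * real (card A)" using ux by simp
  have sk: "real k / 2 \<le> real s" unfolding s_def by linarith
  have ks: "real k \<le> 2 * real s" using sk by simp
  have s10: "10 * real m / \<epsilon> \<le> real s" 
  proof -
    have "10 * real m / \<epsilon> = (20 * real m / \<epsilon>) / 2" by simp
    thus ?thesis using K20 kK sk by linarith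
  qed
  have cardP: "card P = m ^ n" unfolding P_def m_def n_def using finA by (simp add: card_PiE)
  have finP: "finite P" unfolding P_def using finA finB by (simp add: finite_PiE)
  have fin\<Omega>: "finite \<Omega>" unfolding \<Omega>_def using finP by (simp add: finite_PiE)
  have card\<Omega>: "card \<Omega> = card P ^ k" unfolding \<Omega>_def by (simp add: card_PiE)
  define MM where "MM = real m ^ n"
  have MMpos: "0 < MM" unfolding MM_def using mr2 by simp
  have cP: "real (card P) = MM" unfolding cardP MM_def by simp
  define Dup where "Dup = {w \<in> \<Omega>. \<not> inj_on w {..<k}}"
  define Bad1 where "Bad1 = {w \<in> \<Omega>. \<exists>f\<in>A \<rightarrow>\<^sub>E B. \<exists>I. I \<subseteq> {..<k} \<and> card I = L \<and>
            (\<forall>i\<in>I. \<exists>S. S \<subseteq> A \<and> card S = T \<and> (\<forall>x\<in>S. w i x = f x))}"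
  define Bad2 where "Bad2 = {w \<in> \<Omega>. \<exists>b\<in>B. \<exists>U. U \<subseteq> A \<and> card U = u \<and>
            (\<exists>I. I \<subseteq> {..<k} \<and> card I = s \<and> (\<forall>i\<in>I. \<forall>a\<in>U. w i a \<noteq> b))}"
  have D: "real (card Dup) \<le> MM ^ k / 4"
  proof -
    have "card Dup \<le> k * k * card P ^ (k - 1)" unfolding Dup_def \<Omega>_def by (rule card_dup[OF finP])
    hence "real (card Dup) \<le> real (k * k * card P ^ (k - 1))" by (rule of_nat_mono)
    hence "real (card Dup) \<le> real k * real k * MM ^ (k - 1)" by (simp add: cP)
    also have "\<dots> \<le> (MM / 4) * MM ^ (k - 1)"
      using numD[OF m2 nm eps Phi1 Phi2, of k] kK1 MMpos
      unfolding K_def MM_def m_def n_def by (intro mult_right_mono) auto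
    also have "\<dots> = MM ^ k / 4" using k1 by (simp add: power_eq_if)
    finally show ?thesis .
  qed
  have B1: "real (card Bad1) \<le> MM ^ k / 4"
  proof -
    have "card Bad1 \<le> card P * ((k choose L) * (((n choose T) * m ^ (n - T)) ^ L * card P ^ (k - L)))"
      unfolding Bad1_def \<Omega>_def P_def n_def m_def by (rule card_bad1[OF finA finB])
    hence "real (card Bad1) \<le> real (card P * ((k choose L) * (((n choose T) * m ^ (n - T)) ^ L * card P ^ (k - L))))"
      by (rule of_nat_mono)
    hence "real (card Bad1) \<le> MM * (real (k choose L) * ((real (n choose T) * real m ^ (n - T)) ^ L * MM ^ (k - L)))"
      by (simp add: cP)
    also have "\<dots> \<le> MM ^ k / 4"
    proof (cases "L \<le> k \<and> T \<le> n")
      case True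
      have "MM * (real (k choose L) * ((real (n choose T) * real m ^ (n - T)) ^ L * MM ^ (k - L)))
          = (MM * real (k choose L) * (real (n choose T) / real m ^ T) ^ L) * MM ^ k"
      proof -
        have "real m ^ (n - T) = MM / real m ^ T" unfolding MM_def using True mr2 by (simp add: power_diff)
        hence e1: "real (n choose T) * real m ^ (n - T) = (real (n choose T) / real m ^ T) * MM" by simp
        have e2: "MM ^ L * MM ^ (k - L) = MM ^ k" using True by (simp add: power_add[symmetric])
        have "MM * (real (k choose L) * ((real (n choose T) * real m ^ (n - T)) ^ L * MM ^ (k - L)))
          = MM * (real (k choose L) * ((real (n choose T) / real m ^ T) ^ L * (MM ^ L * MM ^ (k - L))))"
          unfolding e1 power_mult_distrib by (simp only: ac_simps)
        also have "\<dots> = (MM * real (k choose L) * (real (n choose T) / real m ^ T) ^ L) * MM ^ k"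
          unfolding e2 by (simp only: ac_simps)
        finally show ?thesis .
      qed
      also have "\<dots> \<le> (1/4) * MM ^ k"
        using numB1[OF m2 nm Phi1 Phi2 L1 kL, of T] Ll Tge MMpos unfolding MM_def m_def n_def
        by (intro mult_right_mono) auto
      finally show ?thesis by simp
    next
      case False
      then have "k choose L = 0 \<or> n choose T = 0" by auto
      then have Z: "MM * (real (k choose L) * ((real (n choose T) * real m ^ (n - T)) ^ L * MM ^ (k - L))) = 0"
        using L1 by (auto simp: power_0_left)
      show ?thesis unfolding Z using MMpos by simp
    qed
    finally show ?thesis .
  qed
  have B2: "real (card Bad2) \<le> MM ^ k / 4"
  proof -
    have "card Bad2 \<le> m * ((n choose u) * ((k choose s) * (((m - 1) ^ u * m ^ (n - u)) ^ s * card P ^ (k - s))))"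
      unfolding Bad2_def \<Omega>_def P_def n_def m_def by (rule card_bad2[OF finA finB])
    hence "real (card Bad2) \<le> real (m * ((n choose u) * ((k choose s) * (((m - 1) ^ u * m ^ (n - u)) ^ s * card P ^ (k - s)))))"
      by (rule of_nat_mono)
    moreover have "real (m - 1) = real m - 1" using m2 unfolding m_def by simp
    ultimately have "real (card Bad2) \<le> real m * (real (n choose u) * (real (k choose s) *
             (((real m - 1) ^ u * real m ^ (n - u)) ^ s * MM ^ (k - s))))"
      by (simp add: cP)
    also have "\<dots> \<le> MM ^ k / 4"
    proof (cases "s \<le> k \<and> u \<le> n")
      case True
      have "real m * (real (n choose u) * (real (k choose s) *
             (((real m - 1) ^ u * real m ^ (n - u)) ^ s * MM ^ (k - s))))
          = (real m * real (n choose u) * real (k choose s) * ((real m - 1) / real m) ^ (u * s)) * MM ^ k"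
      proof -
        have "real m ^ (n - u) = MM / real m ^ u" unfolding MM_def using True mr2 by (simp add: power_diff)
        hence e1: "(real m - 1) ^ u * real m ^ (n - u) = ((real m - 1) / real m) ^ u * MM"
          by (simp add: power_divide)
        have e2: "MM ^ s * MM ^ (k - s) = MM ^ k" using True by (simp add: power_add[symmetric])
        have "real m * (real (n choose u) * (real (k choose s) *
             (((real m - 1) ^ u * real m ^ (n - u)) ^ s * MM ^ (k - s))))
          = real m * (real (n choose u) * (real (k choose s) *
             ((((real m - 1) / real m) ^ u) ^ s * (MM ^ s * MM ^ (k - s)))))"
          unfolding e1 power_mult_distrib by (simp only: ac_simps)
        also have "\<dots> = (real m * real (n choose u) * real (k choose s) * ((real m - 1) / real m) ^ (u * s)) * MM ^ k"
          unfolding e2 power_mult by (simp only: ac_simps)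
        finally show ?thesis .
      qed
      also have "\<dots> \<le> (1/4) * MM ^ k"
        using numB2[OF m2 nm eps ugt[unfolded n_def] ks s10[unfolded m_def]] MMpos unfolding MM_def m_def n_def
        by (intro mult_right_mono) auto
      finally show ?thesis by simp
    next
      case False
      then have "k choose s = 0 \<or> n choose u = 0" by auto
      then have "real m * (real (n choose u) * (real (k choose s) *
             (((real m - 1) ^ u * real m ^ (n - u)) ^ s * MM ^ (k - s)))) = 0" by auto
      then show ?thesis using MMpos by (simp only:) simp
    qed
    finally show ?thesis .
  qed
  have "card (Dup \<union> Bad1 \<union> Bad2) \<le> card Dup + card Bad1 + card Bad2"
    using card_Un_le[of "Dup \<union> Bad1" Bad2] card_Un_le[of Dup Bad1] by linarith
  hence "real (card (Dup \<union> Bad1 \<union> Bad2)) \<le> real (card Dup) + real (card Bad1) + real (card Bad2)"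
    by (metis of_nat_add of_nat_mono)
  also have "\<dots> \<le> 3/4 * MM ^ k" using D B1 B2 by simp
  also have "\<dots> < real (card \<Omega>)" unfolding card\<Omega> using cP MMpos by simp
  finally have "card (Dup \<union> Bad1 \<union> Bad2) < card \<Omega>" by simp
  moreover have "finite (Dup \<union> Bad1 \<union> Bad2)"
    using fin\<Omega> unfolding Dup_def Bad1_def Bad2_def by auto
  ultimately have "\<not> \<Omega> \<subseteq> Dup \<union> Bad1 \<union> Bad2" using card_mono not_le by metis
  then obtain w where w: "w \<in> \<Omega>" and wn: "w \<notin> Dup \<union> Bad1 \<union> Bad2" by blast
  have inj: "inj_on w {..<k}" using w wn unfolding Dup_def by auto
  have nb1: "\<not> (\<exists>f\<in>A \<rightarrow>\<^sub>E B. \<exists>I. I \<subseteq> {..<k} \<and> card I = L \<and>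
            (\<forall>i\<in>I. \<exists>S. S \<subseteq> A \<and> card S = T \<and> (\<forall>x\<in>S. w i x = f x)))"
    using w wn unfolding Bad1_def by blast
  have nb2: "\<not> (\<exists>b\<in>B. \<exists>U. U \<subseteq> A \<and> card U = u \<and>
            (\<exists>I. I \<subseteq> {..<k} \<and> card I = s \<and> (\<forall>i\<in>I. \<forall>a\<in>U. w i a \<noteq> b)))"
    using w wn unfolding Bad2_def by blast
  have w': "w \<in> {..<k} \<rightarrow>\<^sub>E (A \<rightarrow>\<^sub>E B)" using w unfolding \<Omega>_def P_def .
  note good = good_C[OF finA finB w' inj nb1 nb2 T_def L1 LPhi s_def u1 ule]
  have c1: "w ` {..<k} \<subseteq> A \<rightarrow>\<^sub>E B" using w' by auto
  have c2: "card (w ` {..<k}) = nat \<lceil>K\<rceil>" using inj by (simp add: card_image k_def)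
  show ?thesis
    using c1 c2 good unfolding K_def by blast
qed

end
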